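(* For any $F\in\mathscr{F}_1$ and $i\in[F]$: (i) $\mathcal{P}^2_{F,i}\supseteq\{0a,1b\}$ for some $a,b\in\mathcal{C}$; in particular $|\mathcal{P}^2_{F,i}|\ge2$. (ii) If $|\mathcal{P}^2_{F,i}|=2$, then (a) $|f_i(s)|\ge2$ for all $s\in\mathcal{S}$, and (b) $\mathcal{P}^2_{F,i}=\bar{\mathcal{P}}^2_{F,i}=\{0a,1b\}$ for some $a,b\in\mathcal{C}$. (iii) For any $s,s'\in\mathcal{S}$ with $s\ne s'$ and $f_i(s)=f_i(s')$, $|\mathcal{P}^2_{F,\tau_i(s)}|=|\mathcal{P}^2_{F,\tau_i(s')}|=2$. (iv) For any $s\in\mathcal{S}$, $|\mathcal{S}_{F,i}(f_i(s))|\le1$ if $\bar{\mathcal{P}}^0_{F,i}(f_i(s))\ne\emptyset$, and $|\mathcal{S}_{F,i}(f_i(s))|\le2$ if $\bar{\mathcal{P}}^0_{F,i}(f_i(s))=\emptyset$. (v) For any $s,s'\in\mathcal{S}$, $f_i(s')\ne f_i(s)0$ and $f_i(s')\ne f_i(s)1$. (vi) For any $s\in\mathcal{S}$, $|\bar{\mathcal{P}}^1_{F,i}(f_i(s)0)|\le1$ and $|\bar{\mathcal{P}}^1_{F,i}(f_i(s)1)|\le1$.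
   Context: $\mathcal{S}$ is a finite source alphabet with $|\mathcal{S}|\ge 2$ and $\mathcal{C}=\{0,1\}$; $\mathcal{A}^k,\mathcal{A}^{\ast},\mathcal{A}^{+}$ are sequences of length $k$, finite, positive finite length; $\lambda$ empty sequence; $\preceq$ prefix, $\prec$ proper prefix; $\mathrm{suff}(x_1\cdots x_n)=x_2\cdots x_n$. A code-tuple $F$ with $m\ge1$ code tables consists of maps $f_i:\mathcal{S}\to\mathcal{C}^{\ast}$ and $\tau_i:\mathcal{S}\to\{0,\dots,m-1\}$, $i\in[F]=\{0,\dots,m-1\}$. $f_i^{\ast}(\lambda)=\lambda$, $f_i^{\ast}(\pmb{x})=f_i(x_1)f^{\ast}_{\tau_i(x_1)}(\mathrm{suff}(\pmb{x}))$. $\mathcal{S}_{F,i}(\pmb{b})=\{s:f_i(s)=\pmb{b}\}$. For integer $k\ge0$, $\pmb{b}\in\mathcal{C}^{\ast}$: $\mathcal{P}^k_{F,i}(\pmb{b})$ is the set of $\pmb{c}\in\mathcal{C}^k$ such that some $\pmb{x}=x_1\cdots x_n\in\mathcal{S}^{+}$ has $f_i^{\ast}(\pmb{x})\succeq\pmb{b}\pmb{c}$ and $f_i(x_1)\succeq\pmb{b}$; $\bar{\mathcal{P}}^k_{F,i}(\pmb{b})$ the same with $f_i(x_1)\succ\pmb{b}$; $\mathcal{P}^k_{F,i}=\mathcal{P}^k_{F,i}(\lambda)$, $\bar{\mathcal{P}}^k_{F,i}=\bar{\mathcal{P}}^k_{F,i}(\lambda)$. $F\in\mathscr{F}_{2\text{-}\mathrm{dec}}$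 if $\mathcal{P}^2_{F,\tau_i(s)}\cap\bar{\mathcal{P}}^2_{F,i}(f_i(s))=\emptyset$ for all $i,s$, and $\mathcal{P}^2_{F,\tau_i(s)}\cap\mathcal{P}^2_{F,\tau_i(s')}=\emptyset$ whenever $s\ne s'$, $f_i(s)=f_i(s')$. Fix $\mu:\mathcal{S}\to(0,1]$ with $\sum_s\mu(s)=1$; $Q_{i,j}(F)=\sum_{s:\tau_i(s)=j}\mu(s)$; $F\in\mathscr{F}_{\mathrm{reg}}$ if $\pmb{\pi}Q(F)=\pmb{\pi}$, $\sum_i\pi_i=1$ has a unique solution. $\mathscr{F}_1=\{F\in\mathscr{F}_{\mathrm{reg}}\cap\mathscr{F}_{2\text{-}\mathrm{dec}}:\mathcal{P}^1_{F,i}=\{0,1\}\text{ for all }i\in[F]\}$. *)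

theory Defs
  imports Complex_Main "HOL-Library.Sublist"
begin

text \<open>Code symbols: False stands for 0, True for 1. A code-tuple with m code tables
is given by m, f :: nat => 's => bool list (f i = f_i) and t :: nat => 's => nat (t i = tau_i);
the source alphabet is the finite type 's.\<close>

definition code_tuple :: "nat \<Rightarrow> (nat \<Rightarrow> 's \<Rightarrow> nat) \<Rightarrow> bool" where
  "code_tuple m t \<longleftrightarrow> m \<ge> 1 \<and> (\<forall>i<m. \<forall>s. t i s < m)"

fun fstar :: "(nat \<Rightarrow> 's \<Rightarrow> bool list) \<Rightarrow> (nat \<Rightarrow> 's \<Rightarrow> nat) \<Rightarrow> nat \<Rightarrow> 's list \<Rightarrow> bool list" where
  "fstar f t i [] = []"
| "fstar f t i (x # xs) = f i x @ fstar f t (t i x) xs"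

definition Pk :: "(nat \<Rightarrow> 's \<Rightarrow> bool list) \<Rightarrow> (nat \<Rightarrow> 's \<Rightarrow> nat) \<Rightarrow> nat \<Rightarrow> nat \<Rightarrow> bool list \<Rightarrow> bool list set" where
  "Pk f t k i b = {c. length c = k \<and> (\<exists>x. x \<noteq> [] \<and> prefix (b @ c) (fstar f t i x) \<and> prefix b (f i (hd x)))}"

definition Pbark :: "(nat \<Rightarrow> 's \<Rightarrow> bool list) \<Rightarrow> (nat \<Rightarrow> 's \<Rightarrow> nat) \<Rightarrow> nat \<Rightarrow> nat \<Rightarrow> bool list \<Rightarrow> bool list set" where
  "Pbark f t k i b = {c. length c = k \<and> (\<exists>x. x \<noteq> [] \<and> prefix (b @ c) (fstar f t i x) \<and> strict_prefix b (f i (hd x)))}"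

definition Sset :: "(nat \<Rightarrow> 's \<Rightarrow> bool list) \<Rightarrow> nat \<Rightarrow> bool list \<Rightarrow> 's set" where
  "Sset f i b = {s. f i s = b}"

definition two_dec :: "nat \<Rightarrow> (nat \<Rightarrow> 's \<Rightarrow> bool list) \<Rightarrow> (nat \<Rightarrow> 's \<Rightarrow> nat) \<Rightarrow> bool" where
  "two_dec m f t \<longleftrightarrow>
     (\<forall>i<m. \<forall>s. Pk f t 2 (t i s) [] \<inter> Pbark f t 2 i (f i s) = {}) \<and>
     (\<forall>i<m. \<forall>s s'. s \<noteq> s' \<and> f i s = f i s' \<longrightarrow> Pk f t 2 (t i s) [] \<inter> Pk f t 2 (t i s') [] = {})"

definition Qmat :: "('s::finite \<Rightarrow> real) \<Rightarrow> (nat \<Rightarrow> 's \<Rightarrow> nat) \<Rightarrow> nat \<Rightarrow> nat \<Rightarrow> real" where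
  "Qmat \<mu> t i j = (\<Sum>s\<in>{s. t i s = j}. \<mu> s)"

definition regular :: "('s::finite \<Rightarrow> real) \<Rightarrow> nat \<Rightarrow> (nat \<Rightarrow> 's \<Rightarrow> nat) \<Rightarrow> bool" where
  "regular \<mu> m t \<longleftrightarrow> (\<exists>!\<pi>::nat \<Rightarrow> real. (\<forall>j\<ge>m. \<pi> j = 0) \<and>
       (\<forall>j<m. (\<Sum>i<m. \<pi> i * Qmat \<mu> t i j) = \<pi> j) \<and> (\<Sum>i<m. \<pi> i) = 1)"

definition F1 :: "('s::finite \<Rightarrow> real) \<Rightarrow> nat \<Rightarrow> (nat \<Rightarrow> 's \<Rightarrow> bool list) \<Rightarrow> (nat \<Rightarrow> 's \<Rightarrow> nat) \<Rightarrow> bool" where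
  "F1 \<mu> m f t \<longleftrightarrow> code_tuple m t \<and> regular \<mu> m t \<and> two_dec m f t \<and>
     (\<forall>i<m. Pk f t 1 i [] = {[False], [True]})"

end

theory Submission
  imports Defs
begin

fun tend :: "(nat \<Rightarrow> 's \<Rightarrow> nat) \<Rightarrow> nat \<Rightarrow> 's list \<Rightarrow> nat" where
  "tend t i [] = i"
| "tend t i (x # xs) = tend t (t i x) xs"

lemma fstar_append: "fstar f t i (x @ y) = fstar f t i x @ fstar f t (tend t i x) y"
  by (induction x arbitrary: i) auto

lemma len2: "length (c::bool list) = 2 \<Longrightarrow> c \<in> {[False,False],[False,True],[True,False],[True,True]}"
  by (cases c; cases "tl c"; cases "hd c"; cases "hd (tl c)"; auto)

lemma len1: "length (c::bool list) = 1 \<Longrightarrow> c \<in> {[False],[True]}"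
  by (cases c; cases "hd c"; auto)

lemma Pk2_fin: "finite (Pk f t 2 j b)"
proof -
  have "Pk f t 2 j b \<subseteq> {[False,False],[False,True],[True,False],[True,True]}"
    using len2 unfolding Pk_def by blast
  then show ?thesis by (rule finite_subset) simp
qed

lemma len2_other: "length (c::bool list) = 2 \<Longrightarrow> c \<noteq> [False, \<not>a] \<Longrightarrow> c \<noteq> [True, \<not>b] \<Longrightarrow> c \<in> {[False,a],[True,b]}"
  using len2[of c] by (cases a; cases b) auto

lemma pref_step: "prefix [d] l \<Longrightarrow> prefix [d, hd (tl l @ [c])] (l @ [c])"
  by (cases l; cases "tl l") (auto simp: prefix_def)

locale L14 =
  fixes m :: nat and f :: "nat \<Rightarrow> 's \<Rightarrow> bool list" and t :: "nat \<Rightarrow> 's \<Rightarrow> nat"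
  assumes ct: "code_tuple m t" and P1: "\<forall>j<m. Pk f t 1 j [] = {[False],[True]}"
    and td: "two_dec m f t"
begin

lemma tlt: "i < m \<Longrightarrow> t i s < m" using ct unfolding code_tuple_def by auto

lemma tend_lt: "i < m \<Longrightarrow> tend t i x < m"
  by (induction x arbitrary: i) (auto simp: tlt)

lemma td1: "i < m \<Longrightarrow> Pk f t 2 (t i s) [] \<inter> Pbark f t 2 i (f i s) = {}"
  using td unfolding two_dec_def by blast

lemma td2: "i < m \<Longrightarrow> s \<noteq> s' \<Longrightarrow> f i s = f i s' \<Longrightarrow> Pk f t 2 (t i s) [] \<inter> Pk f t 2 (t i s') [] = {}"
  using td unfolding two_dec_def by blast

lemma E: "j < m \<Longrightarrow> \<exists>y. y \<noteq> [] \<and> prefix [c] (fstar f t j y)"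
proof -
  assume j: "j < m"
  have "[c] \<in> Pk f t 1 j []" using P1 j by (cases c) auto
  then show ?thesis unfolding Pk_def by auto
qed

lemma Ext: "j < m \<Longrightarrow> \<exists>y. y \<noteq> [] \<and> prefix (fstar f t j x @ [c]) (fstar f t j (x @ y))"
proof -
  assume j: "j < m"
  obtain y where "y \<noteq> []" "prefix [c] (fstar f t (tend t j x) y)"
    using E[OF tend_lt[OF j]] by blast
  then show ?thesis by (intro exI[of _ y]) (simp add: fstar_append)
qed

lemma I: "j < m \<Longrightarrow> \<exists>e. [d,e] \<in> Pk f t 2 j []"
proof -
  assume j: "j < m"
  obtain y0 where y0: "y0 \<noteq> []" "prefix [d] (fstar f t j y0)" using E[OF j] by blast
  obtain y where y: "prefix (fstar f t j y0 @ [True]) (fstar f t j (y0 @ y))"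
    using Ext[OF j] by blast
  have "prefix [d, hd (tl (fstar f t j y0) @ [True])] (fstar f t j (y0 @ y))"
    using pref_step[OF y0(2)] y prefix_order.trans by blast
  then show ?thesis unfolding Pk_def using y0(1) by (intro exI) auto
qed

lemma I2: "j < m \<Longrightarrow> \<exists>a b. {[False,a],[True,b]} \<subseteq> Pk f t 2 j []"
  using I[of j False] I[of j True] by auto

lemma V: "i < m \<Longrightarrow> f i s' \<noteq> f i s @ [d]"
proof
  assume i: "i < m" and eq: "f i s' = f i s @ [d]"
  obtain e where e: "[d,e] \<in> Pk f t 2 (t i s) []" using I tlt i by blast
  obtain y where y: "y \<noteq> []" "prefix [e] (fstar f t (t i s') y)" using E tlt i by blast
  have "prefix (f i s @ [d,e]) (fstar f t i (s' # y))"
    using y(2) eq by (simp add: prefix_def) 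
  moreover have "strict_prefix (f i s) (f i (hd (s' # y)))" using eq by (simp add: strict_prefix_def)
  ultimately have "[d,e] \<in> Pbark f t 2 i (f i s)" unfolding Pbark_def
    by (intro CollectI conjI exI[of _ "s' # y"]) auto
  then show False using td1[OF i, of s] e by blast
qed


lemma bar1: "[e] \<in> Pbark f t 1 i (b @ [d]) \<Longrightarrow> [d,e] \<in> Pbark f t 2 i b"
proof -
  assume "[e] \<in> Pbark f t 1 i (b @ [d])"
  then obtain x where x: "x \<noteq> []" "prefix (b @ [d] @ [e]) (fstar f t i x)"
    "strict_prefix (b @ [d]) (f i (hd x))" unfolding Pbark_def by auto
  have "strict_prefix b (b @ [d])" by (simp add: strict_prefix_def)
  then have "strict_prefix b (f i (hd x))" using x(3) by (meson prefix_order.less_trans)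
  then show ?thesis unfolding Pbark_def using x by auto
qed

lemma VI: "i < m \<Longrightarrow> card (Pbark f t 1 i (f i s @ [d])) \<le> 1"
proof -
  assume i: "i < m"
  let ?X = "Pbark f t 1 i (f i s @ [d])"
  obtain e where e: "[d,e] \<in> Pk f t 2 (t i s) []" using I tlt i by blast
  have "[e] \<notin> ?X" using bar1[of e i "f i s" d] td1[OF i, of s] e by blast
  moreover have "?X \<subseteq> {[False],[True]}" using len1 unfolding Pbark_def by blast
  ultimately have "?X \<subseteq> {[\<not> e]}" by (cases e) auto
  then show ?thesis using card_mono[of "{[\<not> e]}" ?X] by simp
qed

lemma disj2:
  assumes i: "i < m" and ss: "s1 \<noteq> s2" "f i s1 = f i s2"
  shows "\<exists>a b. {[False,a],[True,b]} \<subseteq> Pk f t 2 (t i s1) [] \<and> {[False,\<not>a],[True,\<not>b]} \<subseteq> Pk f t 2 (t i s2) []"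
proof -
  obtain a1 b1 where 1: "{[False,a1],[True,b1]} \<subseteq> Pk f t 2 (t i s1) []"
    using I2[OF tlt[OF i, of s1]] by (elim exE)
  obtain a2 b2 where 2: "{[False,a2],[True,b2]} \<subseteq> Pk f t 2 (t i s2) []"
    using I2[OF tlt[OF i, of s2]] by (elim exE)
  have dj: "Pk f t 2 (t i s1) [] \<inter> Pk f t 2 (t i s2) [] = {}" using td2[OF i ss] .
  have "a2 \<noteq> a1"
  proof
    assume "a2 = a1"
    then have "[False,a1] \<in> Pk f t 2 (t i s1) [] \<inter> Pk f t 2 (t i s2) []" using 1 2 by simp
    then show False using dj by blast
  qed
  moreover have "b2 \<noteq> b1"
  proof
    assume "b2 = b1"
    then have "[True,b1] \<in> Pk f t 2 (t i s1) [] \<inter> Pk f t 2 (t i s2) []" using 1 2 by simp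
    then show False using dj by blast
  qed
  ultimately have h: "a2 = (\<not> a1)" "b2 = (\<not> b1)" by auto
  show ?thesis using 1 2 unfolding h by (intro exI[of _ a1] exI[of _ b1]) simp
qed

lemma IV1:
  assumes i: "i < m" and ne: "Pbark f t 0 i (f i s) \<noteq> {}" and fin: "finite (Sset f i (f i s))"
  shows "card (Sset f i (f i s)) \<le> 1"
proof -
  obtain x where x: "x \<noteq> []" "strict_prefix (f i s) (f i (hd x))"
    using ne unfolding Pbark_def by auto
  then obtain d r where dr: "f i (hd x) = f i s @ d # r"
  proof -
    obtain zs where "f i (hd x) = f i s @ zs" "zs \<noteq> []"
      using x(2) unfolding strict_prefix_def prefix_def by auto
    then show ?thesis using that by (cases zs) auto
  qed
  have "r \<noteq> []" using V[OF i, of "hd x" s d] dr by auto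
  then obtain e r' where r: "r = e # r'" by (cases r) auto
  have "[d,e] \<in> Pbark f t 2 i (f i s)" unfolding Pbark_def
    using dr r by (intro CollectI conjI exI[of _ "[hd x]"]) (auto simp: strict_prefix_def)
  have "\<forall>a1\<in>Sset f i (f i s). \<forall>a2\<in>Sset f i (f i s). a1 = a2"
  proof (intro ballI, rule ccontr)
    fix s1 s2 assume s: "s1 \<in> Sset f i (f i s)" "s2 \<in> Sset f i (f i s)" "s1 \<noteq> s2"
    then have fs: "f i s1 = f i s" "f i s2 = f i s" unfolding Sset_def by auto
    obtain a b where ab: "{[False,a],[True,b]} \<subseteq> Pk f t 2 (t i s1) []"
      "{[False,\<not>a],[True,\<not>b]} \<subseteq> Pk f t 2 (t i s2) []" using disj2[OF i s(3)] fs by auto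
    have d1: "Pk f t 2 (t i s1) [] \<inter> Pbark f t 2 i (f i s) = {}" using td1[OF i, of s1] fs(1) by simp
    have d2: "Pk f t 2 (t i s2) [] \<inter> Pbark f t 2 i (f i s) = {}" using td1[OF i, of s2] fs(2) by simp
    have "[d,e] \<notin> Pk f t 2 (t i s1) []" "[d,e] \<notin> Pk f t 2 (t i s2) []"
      using d1 d2 \<open>[d,e] \<in> Pbark f t 2 i (f i s)\<close> by blast+
    have "[d,e] \<in> Pk f t 2 (t i s1) [] \<union> Pk f t 2 (t i s2) []"
    proof (cases d)
      case True
      then show ?thesis using ab by (cases "e = b") auto
    next
      case False
      then show ?thesis using ab by (cases "e = a") auto
    qed
    then show False using \<open>[d,e] \<notin> Pk f t 2 (t i s1) []\<close> \<open>[d,e] \<notin> Pk f t 2 (t i s2) []\<close> by blast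
  qed
  then show ?thesis using card_le_Suc0_iff_eq[OF fin] by simp
qed

lemma IV2:
  assumes i: "i < m" and fin: "finite (Sset f i (f i s))"
  shows "card (Sset f i (f i s)) \<le> 2"
proof (rule ccontr)
  assume "\<not> ?thesis"
  then have "3 \<le> card (Sset f i (f i s))" by simp
  then obtain T where T: "T \<subseteq> Sset f i (f i s)" "card T = 3"
    by (rule obtain_subset_with_card_n)
  have "\<exists>x y z. T = {x,y,z} \<and> x \<noteq> y \<and> y \<noteq> z \<and> x \<noteq> z" using T(2) card_3_iff by blast
  then obtain x y z where xyz: "T = {x,y,z}" "x \<noteq> y" "y \<noteq> z" "x \<noteq> z" by blast
  have "x \<in> Sset f i (f i s)" "y \<in> Sset f i (f i s)" "z \<in> Sset f i (f i s)" using T(1) xyz(1) by blast+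
  then have fs: "f i x = f i y" "f i y = f i z" "f i x = f i z" unfolding Sset_def by simp_all
  obtain ax where ax: "[False,ax] \<in> Pk f t 2 (t i x) []" using I tlt i by blast
  obtain ay where ay: "[False,ay] \<in> Pk f t 2 (t i y) []" using I tlt i by blast
  obtain az where az: "[False,az] \<in> Pk f t 2 (t i z) []" using I tlt i by blast
  have "ax = ay \<or> ay = az \<or> ax = az" by auto
  then show False
  proof (elim disjE)
    assume h: "ax = ay" have "[False,ax] \<in> Pk f t 2 (t i y) []" using ay h by simp then show False using td2[OF i xyz(2) fs(1)] ax by blast
  next
    assume h: "ay = az" have "[False,ay] \<in> Pk f t 2 (t i z) []" using az h by simp then show False using td2[OF i xyz(3) fs(2)] ay by blast
  next
    assume h: "ax = az" have "[False,ax] \<in> Pk f t 2 (t i z) []" using az h by simp then show False using td2[OF i xyz(4) fs(3)] ax by blast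
  qed
qed

lemma III:
  assumes i: "i < m" and ss: "s1 \<noteq> s2" "f i s1 = f i s2"
  shows "card (Pk f t 2 (t i s1) []) = 2 \<and> card (Pk f t 2 (t i s2) []) = 2"
proof -
  obtain a b where ab: "{[False,a],[True,b]} \<subseteq> Pk f t 2 (t i s1) []"
      "{[False,\<not>a],[True,\<not>b]} \<subseteq> Pk f t 2 (t i s2) []" using disj2[OF i ss] by auto
  have dj: "Pk f t 2 (t i s1) [] \<inter> Pk f t 2 (t i s2) [] = {}" using td2[OF i ss] .
  have "Pk f t 2 (t i s1) [] = {[False,a],[True,b]}"
  proof
    show "Pk f t 2 (t i s1) [] \<subseteq> {[False,a],[True,b]}"
    proof
      fix c assume c: "c \<in> Pk f t 2 (t i s1) []"
      then have "length c = 2" unfolding Pk_def by auto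
      moreover have "c \<noteq> [False, \<not>a]" "c \<noteq> [True, \<not>b]" using c dj ab(2) by blast+
      ultimately show "c \<in> {[False,a],[True,b]}" by (rule len2_other)
    qed
  qed (fact ab(1))
  moreover have "Pk f t 2 (t i s2) [] = {[False,\<not>a],[True,\<not>b]}"
  proof
    show "Pk f t 2 (t i s2) [] \<subseteq> {[False,\<not>a],[True,\<not>b]}"
    proof
      fix c assume c: "c \<in> Pk f t 2 (t i s2) []"
      then have "length c = 2" unfolding Pk_def by auto
      moreover have "c \<noteq> [False, a]" "c \<noteq> [True, b]" using c dj ab(1) by blast+
      ultimately show "c \<in> {[False,\<not>a],[True,\<not>b]}" using len2_other[of c "\<not>a" "\<not>b"] by simp
    qed
  qed (fact ab(2))
  ultimately show ?thesis by simp
qed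


lemma Iw: "i < m \<Longrightarrow> x \<noteq> [] \<Longrightarrow> \<exists>w x'. length w = 2 \<and> x' \<noteq> [] \<and> hd x' = hd x \<and> prefix w (fstar f t i x')"
proof -
  assume i: "i < m" and x: "x \<noteq> []"
  obtain y1 where y1: "prefix (fstar f t i x @ [True]) (fstar f t i (x @ y1))" using Ext[OF i] by blast
  obtain y2 where y2: "prefix (fstar f t i (x @ y1) @ [True]) (fstar f t i ((x @ y1) @ y2))" using Ext[OF i] by blast
  have "length (fstar f t i (x @ y1)) \<ge> 1" using prefix_length_le[OF y1] by simp
  then have "length (fstar f t i ((x @ y1) @ y2)) \<ge> 2" using prefix_length_le[OF y2] by simp
  then show ?thesis using x
    by (intro exI[of _ "take 2 (fstar f t i ((x @ y1) @ y2))"] exI[of _ "(x @ y1) @ y2"])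
       (simp add: take_is_prefix)
qed

lemma squeeze: "j < m \<Longrightarrow> Pk f t 2 j [] \<subseteq> {[False,a],[True,b]} \<Longrightarrow> [False,a] \<in> Pk f t 2 j [] \<and> [True,b] \<in> Pk f t 2 j []"
proof -
  assume j: "j < m" and sub: "Pk f t 2 j [] \<subseteq> {[False,a],[True,b]}"
  obtain a' b' where ab: "{[False,a'],[True,b']} \<subseteq> Pk f t 2 j []" using I2[OF j] by (elim exE)
  have "[False,a'] \<in> {[False,a],[True,b]}" "[True,b'] \<in> {[False,a],[True,b]}" using ab sub by blast+
  then have "a' = a" "b' = b" by simp_all
  then show ?thesis using ab by simp
qed

lemma sub_empty: "f i s = [] \<Longrightarrow> Pk f t 2 (t i s) [] \<subseteq> Pk f t 2 i []"
proof
  fix c assume fs: "f i s = []" and c: "c \<in> Pk f t 2 (t i s) []"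
  then obtain x where x: "length c = 2" "x \<noteq> []" "prefix c (fstar f t (t i s) x)" unfolding Pk_def by auto
  have "fstar f t i (s # x) = fstar f t (t i s) x" using fs by simp
  then show "c \<in> Pk f t 2 i []" unfolding Pk_def using x
    by (intro CollectI conjI exI[of _ "s # x"]) simp_all
qed

lemma II:
  assumes i: "i < m" and two: "\<And>s::'s. \<exists>s'. s' \<noteq> s" and c2: "card (Pk f t 2 i []) = 2"
  shows "(\<forall>s. length (f i s) \<ge> 2) \<and>
         (\<exists>a b. Pk f t 2 i [] = {[False, a], [True, b]} \<and> Pbark f t 2 i [] = {[False, a], [True, b]})"
proof -
  obtain a b where ab: "{[False,a],[True,b]} \<subseteq> Pk f t 2 i []" using I2[OF i] by (elim exE)
  have "card {[False,a],[True,b]} = card (Pk f t 2 i [])" using c2 by simp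
  then have Peq: "{[False,a],[True,b]} = Pk f t 2 i []" by (rule card_subset_eq[OF Pk2_fin ab])
  have P: "c \<in> Pk f t 2 i [] \<longleftrightarrow> c = [False,a] \<or> c = [True,b]" for c
    using Peq by auto
  have len: "length (f i s) \<ge> 2" for s
  proof (rule ccontr)
    assume "\<not> ?thesis"
    then consider "f i s = []" | d where "f i s = [d]"
      by (cases "f i s"; cases "tl (f i s)") auto
    then show False
    proof cases
      case 1
      have sq: "[False,a] \<in> Pk f t 2 (t i s) [] \<and> [True,b] \<in> Pk f t 2 (t i s) []"
        using squeeze[OF tlt[OF i] subset_trans[OF sub_empty[OF 1] equalityD2[OF Peq]]] .
      obtain s' where s': "s' \<noteq> s" using two[of s] by (elim exE)
      show False
      proof (cases "f i s' = []")
        case True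
        have "[False,a] \<in> Pk f t 2 (t i s') []"
          using squeeze[OF tlt[OF i] subset_trans[OF sub_empty[OF True] equalityD2[OF Peq]]] by simp
        moreover have "f i s' = f i s" using True 1 by simp
        ultimately show False using td2[OF i s' \<open>f i s' = f i s\<close>] sq by blast
      next
        case False
        obtain w x' where w: "length w = 2" "x' \<noteq> []" "hd x' = s'" "prefix w (fstar f t i x')"
          using Iw[OF i, of "[s']"] by auto
        have wb: "w \<in> Pbark f t 2 i (f i s)" unfolding Pbark_def using w False 1
          by (intro CollectI conjI exI[of _ x']) (simp_all add: strict_prefix_def)
        have "w \<in> Pk f t 2 i []" unfolding Pk_def using w
          by (intro CollectI conjI exI[of _ x']) simp_all
        then have "w \<in> Pk f t 2 (t i s) []" using sq unfolding P by auto
        then show False using td1[OF i, of s] wb by blast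
      qed
    next
      case (2 d)
      have "[d,c] \<in> Pk f t 2 i []" for c
      proof -
        obtain y where y: "y \<noteq> []" "prefix [c] (fstar f t (t i s) y)" using E[OF tlt[OF i]] by blast
        have "prefix [d,c] (fstar f t i (s # y))" using y(2) 2 by (simp add: prefix_def)
        then show ?thesis unfolding Pk_def by (intro CollectI conjI exI[of _ "s # y"]) simp_all
      qed
      then have "[d,False] = [False,a] \<or> [d,False] = [True,b]" "[d,True] = [False,a] \<or> [d,True] = [True,b]"
        unfolding P by blast+
      then show False by (cases d) auto
    qed
  qed
  have "Pbark f t 2 i [] = Pk f t 2 i []"
  proof
    show "Pbark f t 2 i [] \<subseteq> Pk f t 2 i []" unfolding Pbark_def Pk_def using prefix_order.less_imp_le by blast
  next
    show "Pk f t 2 i [] \<subseteq> Pbark f t 2 i []"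
    proof
      fix c assume "c \<in> Pk f t 2 i []"
      then obtain x where x: "length c = 2" "x \<noteq> []" "prefix c (fstar f t i x)" unfolding Pk_def by auto
      have "f i (hd x) \<noteq> []" using len[of "hd x"] by auto
      then show "c \<in> Pbark f t 2 i []" unfolding Pbark_def using x
        by (intro CollectI conjI exI[of _ x]) (simp_all add: strict_prefix_def)
    qed
  qed
  then show ?thesis using len Peq[symmetric] by (intro conjI allI exI[of _ a] exI[of _ b]) simp_all
qed

end

theorem lemma14:
  fixes \<mu> :: "'s::finite \<Rightarrow> real" and m :: nat
    and f :: "nat \<Rightarrow> 's \<Rightarrow> bool list" and t :: "nat \<Rightarrow> 's \<Rightarrow> nat" and i :: nat
  assumes "card (UNIV :: 's set) \<ge> 2"
    and "\<And>s. 0 < \<mu> s \<and> \<mu> s \<le> 1" and "(\<Sum>s\<in>UNIV. \<mu> s) = 1"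
    and "F1 \<mu> m f t" and "i < m"
  shows "(\<exists>a b. {[False, a], [True, b]} \<subseteq> Pk f t 2 i [])
    \<and> card (Pk f t 2 i []) \<ge> 2
    \<and> (card (Pk f t 2 i []) = 2 \<longrightarrow>
         (\<forall>s. length (f i s) \<ge> 2) \<and>
         (\<exists>a b. Pk f t 2 i [] = {[False, a], [True, b]} \<and> Pbark f t 2 i [] = {[False, a], [True, b]}))
    \<and> (\<forall>s s'. s \<noteq> s' \<and> f i s = f i s' \<longrightarrow>
         card (Pk f t 2 (t i s) []) = 2 \<and> card (Pk f t 2 (t i s') []) = 2)
    \<and> (\<forall>s. (Pbark f t 0 i (f i s) \<noteq> {} \<longrightarrow> card (Sset f i (f i s)) \<le> 1) \<and>
           (Pbark f t 0 i (f i s) = {} \<longrightarrow> card (Sset f i (f i s)) \<le> 2))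
    \<and> (\<forall>s s'. f i s' \<noteq> f i s @ [False] \<and> f i s' \<noteq> f i s @ [True])
    \<and> (\<forall>s. card (Pbark f t 1 i (f i s @ [False])) \<le> 1 \<and> card (Pbark f t 1 i (f i s @ [True])) \<le> 1)"
proof -
  have F: "code_tuple m t" "regular \<mu> m t" "two_dec m f t" "\<forall>i<m. Pk f t 1 i [] = {[False], [True]}"
    using assms(4) unfolding F1_def by auto
  interpret L: L14 m f t using F by (unfold_locales) auto
  have i: "i < m" by fact
  have two: "\<exists>s'. s' \<noteq> s" for s :: 's
  proof (rule ccontr)
    assume "\<not> ?thesis"
    then have "UNIV = {s}" by auto
    then have "card (UNIV::'s set) = card {s}" by (rule arg_cong)
    then have "card (UNIV::'s set) = 1" by simp
    then show False using assms(1) by simp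
  qed
  have fin: "finite (Sset f i b)" for b by simp
  obtain a b where ab: "{[False,a],[True,b]} \<subseteq> Pk f t 2 i []" using L.I2[OF i] by (elim exE)
  have "card {[False,a],[True,b]} \<le> card (Pk f t 2 i [])" by (rule card_mono[OF Pk2_fin ab])
  then have c2: "card (Pk f t 2 i []) \<ge> 2" by simp
  show ?thesis
  proof (intro conjI allI impI)
    show "\<exists>a b. {[False, a], [True, b]} \<subseteq> Pk f t 2 i []" using ab by blast
  next
    show "2 \<le> card (Pk f t 2 i [])" by (fact c2)
  next
    assume "card (Pk f t 2 i []) = 2"
    then have h: "(\<forall>s. length (f i s) \<ge> 2) \<and>
         (\<exists>a b. Pk f t 2 i [] = {[False, a], [True, b]} \<and> Pbark f t 2 i [] = {[False, a], [True, b]})"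
      using L.II[OF i two] by blast
    fix s show "2 \<le> length (f i s)" using h by blast
  next
    assume "card (Pk f t 2 i []) = 2"
    then show "\<exists>a b. Pk f t 2 i [] = {[False, a], [True, b]} \<and> Pbark f t 2 i [] = {[False, a], [True, b]}"
      using L.II[OF i two] by blast
  next
    fix s s' assume "s \<noteq> s' \<and> f i s = f i s'"
    then show "card (Pk f t 2 (t i s) []) = 2" "card (Pk f t 2 (t i s') []) = 2"
      using L.III[OF i] by blast+
  next
    fix s assume "Pbark f t 0 i (f i s) \<noteq> {}"
    then show "card (Sset f i (f i s)) \<le> 1" using L.IV1[OF i _ fin] by blast
  next
    fix s show "card (Sset f i (f i s)) \<le> 2" using L.IV2[OF i fin] by blast
  next
    fix s s' show "f i s' \<noteq> f i s @ [False]" "f i s' \<noteq> f i s @ [True]" using L.V[OF i] by blast+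
  next
    fix s show "card (Pbark f t 1 i (f i s @ [False])) \<le> 1" "card (Pbark f t 1 i (f i s @ [True])) \<le> 1"
      using L.VI[OF i] by blast+
  qed
qed

end
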